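(* Let $M\ge3$ and $N\ge1$ be integers and let $f_0,f_1,f_2,f_3:\mathbb{Z}_M\to\mathbb{Z}_N$ be four distinct functions forming a totally indistinguishable set. Then for each $x\in\mathbb{Z}_M$ exactly one of the following holds: (type 1) $f_0(x)=f_1(x)=f_2(x)=f_3(x)$; (type 2) $f_0(x)=f_1(x)\neq f_2(x)=f_3(x)$; (type 3) $f_0(x)=f_2(x)\neq f_1(x)=f_3(x)$; (type 4) $f_0(x)=f_3(x)\neq f_1(x)=f_2(x)$. Let $N_i$ be the number of $x\in\mathbb{Z}_M$ of type $i$, and let $\Gamma$ be the $4\times4$ matrix with $\Gamma_{j'j}=\#\{x\in\mathbb{Z}_M: f_{j'}(x)=f_j(x)\}$. Then $\det\Gamma=16(M+N_1)N_2N_3N_4$, and the standard oracle operators $U_{f_0},U_{f_1},U_{f_2},U_{f_3}$ are unambiguously distinguishable if and only if $N_2>0$, $N_3>0$ and $N_4>0$.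
   Context: A set $\sigma$ of functions $\mathbb{Z}_M\to\mathbb{Z}_N$ is totally indistinguishable if for every $x\in\mathbb{Z}_M$ and every $f\in\sigma$ there exists $f'\in\sigma$ with $f'\neq f$ and $f'(x)=f(x)$. For $f:\mathbb{Z}_M\to\mathbb{Z}_N$ the standard oracle operator is the unitary $U_f$ on $\mathcal{H}_M\otimes\mathcal{H}_N$ (with orthonormal bases $\{|x\rangle\}_{x\in\mathbb{Z}_M}$, $\{|y\rangle\}_{y\in\mathbb{Z}_N}$) given by $U_f|x\rangle\otimes|y\rangle=|x\rangle\otimes|y\oplus f(x)\rangle$, $\oplus$ being addition mod $N$. A finite list of unitary operators $W_1,\ldots,W_K$ on a finite-dimensional Hilbert space $\mathcal{H}$ is called unambiguously distinguishable if there exist a finite-dimensional ancilla space $\mathcal{H}_A$ and a unit vector $|\psi\rangle\in\mathcal{H}\otimes\mathcal{H}_A$ such that the vectors $(W_j\otimes\mathbb{1}_A)|\psi\rangle$ are linearly independent. *)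

theory Defs
  imports Complex_Main "Jordan_Normal_Form.Determinant"
begin

text \<open>Functions Z_M to Z_N are modelled as f :: nat => nat, only their values on
  {0..<M} matter (values there lie in {0..<N}).\<close>

definition is_fun_ZM_ZN :: "nat \<Rightarrow> nat \<Rightarrow> (nat \<Rightarrow> nat) \<Rightarrow> bool" where
  "is_fun_ZM_ZN M N f \<longleftrightarrow> (\<forall>x<M. f x < N)"

definition differ_on :: "nat \<Rightarrow> (nat \<Rightarrow> nat) \<Rightarrow> (nat \<Rightarrow> nat) \<Rightarrow> bool" where
  "differ_on M f g \<longleftrightarrow> (\<exists>x<M. f x \<noteq> g x)"

definition totally_indistinguishable :: "nat \<Rightarrow> (nat \<Rightarrow> nat) set \<Rightarrow> bool" where
  "totally_indistinguishable M \<sigma> \<longleftrightarrow>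
     (\<forall>x<M. \<forall>f\<in>\<sigma>. \<exists>f'\<in>\<sigma>. differ_on M f' f \<and> f' x = f x)"

text \<open>Finite-dimensional Hilbert spaces in coordinates: H has orthonormal basis indexed by
  a finite set D; an operator is its matrix W :: 'd => 'd => complex (W d d' = <d|W|d'>);
  an ancilla H_A of dimension n has basis {0..<n}; vectors of H (x) H_A are
  functions on D \<times> {0..<n}.\<close>

definition op_tensor_id :: "'d set \<Rightarrow> ('d \<Rightarrow> 'd \<Rightarrow> complex) \<Rightarrow> ('d \<times> nat \<Rightarrow> complex) \<Rightarrow> ('d \<times> nat \<Rightarrow> complex)" where
  "op_tensor_id D W \<psi> = (\<lambda>(d, a). \<Sum>d'\<in>D. W d d' * \<psi> (d', a))"

definition lin_indep_family :: "'i set \<Rightarrow> nat \<Rightarrow> (nat \<Rightarrow> 'i \<Rightarrow> complex) \<Rightarrow> bool" where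
  "lin_indep_family S K v \<longleftrightarrow>
     (\<forall>c :: nat \<Rightarrow> complex. (\<forall>p\<in>S. (\<Sum>j<K. c j * v j p) = 0) \<longrightarrow> (\<forall>j<K. c j = 0))"

definition unambiguously_distinguishable :: "'d set \<Rightarrow> nat \<Rightarrow> (nat \<Rightarrow> 'd \<Rightarrow> 'd \<Rightarrow> complex) \<Rightarrow> bool" where
  "unambiguously_distinguishable D K W \<longleftrightarrow>
     (\<exists>n::nat. \<exists>\<psi> :: 'd \<times> nat \<Rightarrow> complex.
        (\<Sum>p\<in>D \<times> {0..<n}. (cmod (\<psi> p))\<^sup>2) = 1 \<and>
        lin_indep_family (D \<times> {0..<n}) K (\<lambda>j. op_tensor_id D (W j) \<psi>))"

text \<open>Standard oracle U_f |x>|y> = |x>|y + f x mod N> on H_M (x) H_N, basis {0..<M} \<times> {0..<N}.\<close>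
definition oracle_op :: "nat \<Rightarrow> (nat \<Rightarrow> nat) \<Rightarrow> (nat \<times> nat) \<Rightarrow> (nat \<times> nat) \<Rightarrow> complex" where
  "oracle_op N f = (\<lambda>(x, y) (x', y'). if x = x' \<and> y = (y' + f x') mod N then 1 else 0)"

definition oracle_basis :: "nat \<Rightarrow> nat \<Rightarrow> (nat \<times> nat) set" where
  "oracle_basis M N = {0..<M} \<times> {0..<N}"

definition point_type :: "(nat \<Rightarrow> nat \<Rightarrow> nat) \<Rightarrow> nat \<Rightarrow> nat \<Rightarrow> bool" where
  "point_type f i x \<longleftrightarrow>
     (i = 1 \<and> f 0 x = f 1 x \<and> f 1 x = f 2 x \<and> f 2 x = f 3 x) \<or>
     (i = 2 \<and> f 0 x = f 1 x \<and> f 1 x \<noteq> f 2 x \<and> f 2 x = f 3 x) \<or>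
     (i = 3 \<and> f 0 x = f 2 x \<and> f 2 x \<noteq> f 1 x \<and> f 1 x = f 3 x) \<or>
     (i = 4 \<and> f 0 x = f 3 x \<and> f 3 x \<noteq> f 1 x \<and> f 1 x = f 2 x)"

definition type_count :: "nat \<Rightarrow> (nat \<Rightarrow> nat \<Rightarrow> nat) \<Rightarrow> nat \<Rightarrow> nat" where
  "type_count M f i = card {x\<in>{0..<M}. point_type f i x}"

definition Gamma_mat :: "nat \<Rightarrow> (nat \<Rightarrow> nat \<Rightarrow> nat) \<Rightarrow> int mat" where
  "Gamma_mat M f = mat 4 4 (\<lambda>(j', j). int (card {x\<in>{0..<M}. f j' x = f j x}))"

end

theory Submission
  imports Defs
begin

lemma det_mat_Suc:
  fixes g :: "nat \<times> nat \<Rightarrow> 'a::comm_ring_1"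
  shows "det (mat (Suc n) (Suc n) g) = (\<Sum>j<Suc n. g (0,j) * (-1)^j *
     det (mat n n (\<lambda>(i',j'). g (Suc i', if j' < j then j' else Suc j'))))"
proof -
  have A: "mat (Suc n) (Suc n) g \<in> carrier_mat (Suc n) (Suc n)" by simp
  have "det (mat (Suc n) (Suc n) g) = (\<Sum>j<Suc n. mat (Suc n) (Suc n) g $$ (0,j) * cofactor (mat (Suc n) (Suc n) g) 0 j)"
    by (rule laplace_expansion_row[OF A]) simp
  also have "\<dots> = (\<Sum>j<Suc n. g (0,j) * (-1)^j *
     det (mat n n (\<lambda>(i',j'). g (Suc i', if j' < j then j' else Suc j'))))"
  proof (rule sum.cong[OF refl])
    fix j assume j: "j \<in> {..<Suc n}"
    have "mat_delete (mat (Suc n) (Suc n) g) 0 j = mat n n (\<lambda>(i',j'). g (Suc i', if j' < j then j' else Suc j'))"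
      unfolding mat_delete_def using j by (intro eq_matI) auto
    then show "mat (Suc n) (Suc n) g $$ (0, j) * cofactor (mat (Suc n) (Suc n) g) 0 j =
         g (0, j) * (- 1) ^ j * det (mat n n (\<lambda>(i', j'). g (Suc i', if j' < j then j' else Suc j')))"
      unfolding cofactor_def using j by simp
  qed
  finally show ?thesis .
qed

lemma det_mat_0: "det (mat 0 0 g) = 1" by simp

lemma det4: fixes g :: "nat \<times> nat \<Rightarrow> 'a::comm_ring_1"
  assumes "g (0,0) = a" and "g (0,1) = b" and "g (0,2) = c" and "g (0,3) = d" and "g (1,0) = b" and "g (1,1) = a" and "g (1,2) = d" and "g (1,3) = c" and "g (2,0) = c" and "g (2,1) = d" and "g (2,2) = a" and "g (2,3) = b" and "g (3,0) = d" and "g (3,1) = c" and "g (3,2) = b" and "g (3,3) = a"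
  shows "det (mat 4 4 g) = (a+b+c+d)*(a+b-c-d)*(a-b+c-d)*(a-b-c+d)"
proof -
  have e: "(4::nat) = Suc (Suc (Suc (Suc 0)))" by simp
  have s: "g (0,0) = a" "g (0,Suc (0)) = b" "g (0,Suc (Suc (0))) = c" "g (0,Suc (Suc (Suc (0)))) = d" "g (Suc (0),0) = b" "g (Suc (0),Suc (0)) = a" "g (Suc (0),Suc (Suc (0))) = d" "g (Suc (0),Suc (Suc (Suc (0)))) = c" "g (Suc (Suc (0)),0) = c" "g (Suc (Suc (0)),Suc (0)) = d" "g (Suc (Suc (0)),Suc (Suc (0))) = a" "g (Suc (Suc (0)),Suc (Suc (Suc (0)))) = b" "g (Suc (Suc (Suc (0))),0) = d" "g (Suc (Suc (Suc (0))),Suc (0)) = c" "g (Suc (Suc (Suc (0))),Suc (Suc (0))) = b" "g (Suc (Suc (Suc (0))),Suc (Suc (Suc (0)))) = a" using assms by (simp_all add: numeral_eq_Suc)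
  show ?thesis unfolding e
  apply (simp add: det_mat_Suc s)
  apply (simp add: algebra_simps)
  done
qed

lemma pt_excl: "point_type f i x \<Longrightarrow> point_type f j x \<Longrightarrow> i = j"
  unfolding point_type_def by auto
lemma pt_range: "point_type f i x \<Longrightarrow> i \<in> {1..4}"
  unfolding point_type_def by auto
lemma cover4:
  fixes a b c d :: nat
  assumes "a = b \<or> a = c \<or> a = d" "b = a \<or> b = c \<or> b = d" "c = a \<or> c = b \<or> c = d" "d = a \<or> d = b \<or> d = c"
  shows "(a=b \<and> b=c \<and> c=d) \<or> (a=b \<and> b\<noteq>c \<and> c=d) \<or> (a=c \<and> c\<noteq>b \<and> b=d) \<or> (a=d \<and> d\<noteq>b \<and> b=c)"
  using assms by smt
lemma pt_card:
  assumes "point_type f 1 x \<or> point_type f 2 x \<or> point_type f 3 x \<or> point_type f 4 x"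
  shows "card {i\<in>{1..4}. point_type f i x} = 1"
proof -
  obtain t where t: "point_type f t x" using assms by blast
  have "{i\<in>{1..4}. point_type f i x} = {t}"
    using t pt_excl[OF t] pt_range[OF t] by blast
  then show ?thesis by simp
qed


lemma sum4: "(\<Sum>j<(4::nat). h j) = h 0 + h 1 + h 2 + h 3"
  by (simp add: eval_nat_numeral)

lemma not_ud:
  fixes c :: "nat \<Rightarrow> complex"
  assumes fin: "finite D"
    and z: "\<forall>d\<in>D. \<forall>d'\<in>D. (\<Sum>j<K. c j * W j d d') = 0" and j0: "j0 < K" "c j0 \<noteq> 0"
  shows "\<not> unambiguously_distinguishable D K W"
proof
  assume "unambiguously_distinguishable D K W"
  then obtain n and \<psi> :: "'a \<times> nat \<Rightarrow> complex" where
    li: "lin_indep_family (D \<times> {0..<n}) K (\<lambda>j. op_tensor_id D (W j) \<psi>)"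
    unfolding unambiguously_distinguishable_def by blast
  have "\<forall>p\<in>D \<times> {0..<n}. (\<Sum>j<K. c j * op_tensor_id D (W j) \<psi> p) = 0"
  proof
    fix p assume p: "p \<in> D \<times> {0..<n}"
    obtain d a where pd: "p = (d, a)" by (cases p)
    have d: "d \<in> D" using p pd by auto
    have "(\<Sum>j<K. c j * op_tensor_id D (W j) \<psi> p) = (\<Sum>j<K. \<Sum>d'\<in>D. c j * W j d d' * \<psi> (d', a))"
      unfolding pd op_tensor_id_def by (simp add: sum_distrib_left mult.assoc)
    also have "\<dots> = (\<Sum>d'\<in>D. \<Sum>j<K. c j * W j d d' * \<psi> (d', a))"
      by (rule sum.swap)
    also have "\<dots> = (\<Sum>d'\<in>D. (\<Sum>j<K. c j * W j d d') * \<psi> (d', a))"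
      by (simp add: sum_distrib_right)
    also have "\<dots> = 0" using z d by simp
    finally show "(\<Sum>j<K. c j * op_tensor_id D (W j) \<psi> p) = 0" .
  qed
  then have "\<forall>j<K. c j = 0" using li unfolding lin_indep_family_def by blast
  then show False using j0 by blast
qed

lemma oracle_psi:
  fixes s :: complex
  assumes a: "a < M" and N: "N \<ge> 1"
  shows "op_tensor_id (oracle_basis M N) (oracle_op N g) (\<lambda>p. if fst p = (snd p, 0) then s else 0) ((x, y), a)
     = (if x = a \<and> y = g a mod N then s else 0)"
proof -
  have "op_tensor_id (oracle_basis M N) (oracle_op N g) (\<lambda>p. if fst p = (snd p, 0) then s else 0) ((x, y), a)
     = (\<Sum>d'\<in>oracle_basis M N. if d' = (a, 0) then oracle_op N g (x,y) (a,0) * s else 0)"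
    unfolding op_tensor_id_def prod.case by (intro sum.cong) auto
  also have "\<dots> = oracle_op N g (x,y) (a,0) * s"
    using a N by (simp add: oracle_basis_def)
  also have "\<dots> = (if x = a \<and> y = g a mod N then s else 0)"
    by (simp add: oracle_op_def)
  finally show ?thesis .
qed

lemma psi_norm:
  assumes M: "M > 0" and N: "N \<ge> 1"
  shows "(\<Sum>p\<in>oracle_basis M N \<times> {0..<M}.
     (cmod (if fst p = (snd p, 0) then complex_of_real (1 / sqrt (real M)) else 0))\<^sup>2) = 1"
proof -
  let ?S = "oracle_basis M N \<times> {0..<M}"
  let ?R = "range (\<lambda>a::nat. ((a, 0::nat), a))"
  have fin: "finite ?S" by (simp add: oracle_basis_def)
  have "(\<Sum>p\<in>?S. (cmod (if fst p = (snd p, 0) then complex_of_real (1 / sqrt (real M)) else 0))\<^sup>2)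
      = (\<Sum>p\<in>?S. if p \<in> ?R then 1 / real M else 0)"
  proof (rule sum.cong[OF refl])
    fix p :: "(nat \<times> nat) \<times> nat"
    have "fst p = (snd p, 0) \<longleftrightarrow> p \<in> ?R" by (cases p) auto
    moreover have "(cmod (complex_of_real (1 / sqrt (real M))))\<^sup>2 = (1 / sqrt (real M))\<^sup>2"
      by (simp only: norm_of_real power2_abs)
    moreover have "(1 / sqrt (real M))\<^sup>2 = 1 / real M"
      using M by (simp add: power_divide)
    ultimately show "(cmod (if fst p = (snd p, 0) then complex_of_real (1 / sqrt (real M)) else 0))\<^sup>2
      = (if p \<in> ?R then 1 / real M else 0)" by auto
  qed
  also have "\<dots> = (\<Sum>p\<in>?S \<inter> ?R. 1 / real M)"
    by (rule sum.inter_restrict[OF fin, symmetric])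
  also have "?S \<inter> ?R = (\<lambda>a. ((a, 0), a)) ` {0..<M}"
    using N by (auto simp: oracle_basis_def)
  also have "(\<Sum>p\<in>(\<lambda>a::nat. ((a, 0::nat), a)) ` {0..<M}. 1 / real M) = real M * (1 / real M)"
    by (simp add: card_image inj_on_def)
  also have "\<dots> = 1" using M by simp
  finally show ?thesis .
qed


lemma alg16:
  fixes p q r t :: int
  shows "(p+q+r+t + (p+q) + (p+r) + (p+t)) * (p+q+r+t + (p+q) - (p+r) - (p+t))
    * (p+q+r+t - (p+q) + (p+r) - (p+t)) * (p+q+r+t - (p+q) - (p+r) + (p+t))
    = 16 * (p+q+r+t+p) * q * r * t"
proof -
  have "p+q+r+t + (p+q) + (p+r) + (p+t) = 2 * (p+q+r+t+p)" by simp
  moreover have "p+q+r+t + (p+q) - (p+r) - (p+t) = 2 * q" by simp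
  moreover have "p+q+r+t - (p+q) + (p+r) - (p+t) = 2 * r" by simp
  moreover have "p+q+r+t - (p+q) - (p+r) + (p+t) = 2 * t" by simp
  ultimately show ?thesis by simp
qed

lemma ex4: "(\<exists>k<(4::nat). P k) \<longleftrightarrow> P 0 \<or> P 1 \<or> P 2 \<or> P 3"
  by (auto simp: eval_nat_numeral less_Suc_eq)

lemma pt_iffs:
  "point_type f 1 x \<longleftrightarrow> f 0 x = f 1 x \<and> f 1 x = f 2 x \<and> f 2 x = f 3 x"
  "point_type f 2 x \<longleftrightarrow> f 0 x = f 1 x \<and> f 1 x \<noteq> f 2 x \<and> f 2 x = f 3 x"
  "point_type f 3 x \<longleftrightarrow> f 0 x = f 2 x \<and> f 2 x \<noteq> f 1 x \<and> f 1 x = f 3 x"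
  "point_type f 4 x \<longleftrightarrow> f 0 x = f 3 x \<and> f 3 x \<noteq> f 1 x \<and> f 1 x = f 2 x"
  by (simp_all add: point_type_def)

lemma pt_cover:
  assumes h0: "f 0 x = f 1 x \<or> f 0 x = f 2 x \<or> f 0 x = f 3 x"
  and h1: "f 1 x = f 0 x \<or> f 1 x = f 2 x \<or> f 1 x = f 3 x"
  and h2: "f 2 x = f 0 x \<or> f 2 x = f 1 x \<or> f 2 x = f 3 x"
  and h3: "f 3 x = f 0 x \<or> f 3 x = f 1 x \<or> f 3 x = f 2 x"
  shows "point_type f 1 x \<or> point_type f 2 x \<or> point_type f 3 x \<or> point_type f 4 x"
  unfolding pt_iffs using cover4[OF h0 h1 h2 h3] by blast

lemma eqs4:
  fixes a b c d :: nat
  assumes "(a=b \<and> b=c \<and> c=d) \<or> (a=b \<and> b\<noteq>c \<and> c=d) \<or> (a=c \<and> c\<noteq>b \<and> b=d) \<or> (a=d \<and> d\<noteq>b \<and> b=c)"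
  shows "a = b \<longleftrightarrow> (a=b \<and> b=c \<and> c=d) \<or> (a=b \<and> b\<noteq>c \<and> c=d)"
    and "c = d \<longleftrightarrow> (a=b \<and> b=c \<and> c=d) \<or> (a=b \<and> b\<noteq>c \<and> c=d)"
    and "a = c \<longleftrightarrow> (a=b \<and> b=c \<and> c=d) \<or> (a=c \<and> c\<noteq>b \<and> b=d)"
    and "b = d \<longleftrightarrow> (a=b \<and> b=c \<and> c=d) \<or> (a=c \<and> c\<noteq>b \<and> b=d)"
    and "a = d \<longleftrightarrow> (a=b \<and> b=c \<and> c=d) \<or> (a=d \<and> d\<noteq>b \<and> b=c)"
    and "b = c \<longleftrightarrow> (a=b \<and> b=c \<and> c=d) \<or> (a=d \<and> d\<noteq>b \<and> b=c)"
  using assms by presburger+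

theorem mainTheorem11:
  fixes M N :: nat and f :: "nat \<Rightarrow> nat \<Rightarrow> nat"
  assumes "M \<ge> 3" and "N \<ge> 1"
    and "\<forall>j<4. is_fun_ZM_ZN M N (f j)"
    and "\<forall>i<4. \<forall>j<4. i \<noteq> j \<longrightarrow> differ_on M (f i) (f j)"
    and "totally_indistinguishable M (f ` {0..<4})"
  shows "(\<forall>x<M. card {i\<in>{1..4}. point_type f i x} = 1)
    \<and> det (Gamma_mat M f) = 16 * (int M + int (type_count M f 1)) * int (type_count M f 2)
                                * int (type_count M f 3) * int (type_count M f 4)
    \<and> (unambiguously_distinguishable (oracle_basis M N) 4 (\<lambda>j. oracle_op N (f j))
         \<longleftrightarrow> type_count M f 2 > 0 \<and> type_count M f 3 > 0 \<and> type_count M f 4 > 0)"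
proof -
  have dist: "\<exists>k<4. k \<noteq> j \<and> f k x = f j x" if j: "j < 4" and x: "x < M" for j x
  proof -
    have "f j \<in> f ` {0..<4}" using j by auto
    then obtain g where g: "g \<in> f ` {0..<4}" "differ_on M g (f j)" "g x = f j x"
      using assms(5) x unfolding totally_indistinguishable_def by blast
    then obtain k where k: "k < 4" "g = f k" by auto
    have "k \<noteq> j" using g(2) k(2) unfolding differ_on_def by auto
    then show ?thesis using k g(3) by auto
  qed
  have cov: "point_type f 1 x \<or> point_type f 2 x \<or> point_type f 3 x \<or> point_type f 4 x"
    if x: "x < M" for x
  proof (rule pt_cover)
    show "f 0 x = f 1 x \<or> f 0 x = f 2 x \<or> f 0 x = f 3 x" using dist[OF _ x, of 0] unfolding ex4 by auto
    show "f 1 x = f 0 x \<or> f 1 x = f 2 x \<or> f 1 x = f 3 x" using dist[OF _ x, of 1] unfolding ex4 by auto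
    show "f 2 x = f 0 x \<or> f 2 x = f 1 x \<or> f 2 x = f 3 x" using dist[OF _ x, of 2] unfolding ex4 by auto
    show "f 3 x = f 0 x \<or> f 3 x = f 1 x \<or> f 3 x = f 2 x" using dist[OF _ x, of 3] unfolding ex4 by auto
  qed
  have part1: "\<forall>x<M. card {i\<in>{1..4}. point_type f i x} = 1"
    using cov pt_card by blast
  define T where "T i = {x\<in>{0..<M}. point_type f i x}" for i
  have finT: "finite (T i)" for i unfolding T_def by auto
  have tc: "type_count M f i = card (T i)" for i unfolding type_count_def T_def by simp
  have disj: "T i \<inter> T j = {}" if "i \<noteq> j" for i j
    using that pt_excl unfolding T_def by blast
  have cardU: "card (T i \<union> T j) = card (T i) + card (T j)" if "i \<noteq> j" for i j
    using card_Un_disjoint[OF finT finT disj[OF that]] .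
  have eqs: "f 0 x = f 1 x \<longleftrightarrow> point_type f 1 x \<or> point_type f 2 x"
     "f 2 x = f 3 x \<longleftrightarrow> point_type f 1 x \<or> point_type f 2 x"
     "f 0 x = f 2 x \<longleftrightarrow> point_type f 1 x \<or> point_type f 3 x"
     "f 1 x = f 3 x \<longleftrightarrow> point_type f 1 x \<or> point_type f 3 x"
     "f 0 x = f 3 x \<longleftrightarrow> point_type f 1 x \<or> point_type f 4 x"
     "f 1 x = f 2 x \<longleftrightarrow> point_type f 1 x \<or> point_type f 4 x"
    if x: "x < M" for x
    using eqs4[OF cov[OF x, unfolded pt_iffs]] unfolding pt_iffs by blast+
  have S: "{x\<in>{0..<M}. f a x = f b x} = T i \<union> T j"
    if "\<And>x. x < M \<Longrightarrow> f a x = f b x \<longleftrightarrow> point_type f i x \<or> point_type f j x" for a b i j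
    using that unfolding T_def by auto
  have C: "card {x\<in>{0..<M}. f a x = f b x} = card (T i) + card (T j)"
    if "\<And>x. x < M \<Longrightarrow> f a x = f b x \<longleftrightarrow> point_type f i x \<or> point_type f j x" "i \<noteq> j" for a b i j
    using S[OF that(1)] cardU[OF that(2)] by simp
  have Mc: "M = card (T 1) + card (T 2) + card (T 3) + card (T 4)"
  proof -
    have "{0..<M} = ((T 1 \<union> T 2) \<union> T 3) \<union> T 4"
    proof (intro equalityI subsetI)
      fix x assume "x \<in> {0..<M}"
      then have x: "x < M" by simp
      have "x \<in> {0..<M}" using x by simp
      with cov[OF x] show "x \<in> ((T 1 \<union> T 2) \<union> T 3) \<union> T 4" unfolding T_def by blast
    next
      fix x assume "x \<in> ((T 1 \<union> T 2) \<union> T 3) \<union> T 4"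
      then show "x \<in> {0..<M}" unfolding T_def by blast
    qed
    then have "M = card (((T 1 \<union> T 2) \<union> T 3) \<union> T 4)" by (metis card_atLeastLessThan diff_zero)
    also have "\<dots> = card ((T 1 \<union> T 2) \<union> T 3) + card (T 4)"
      by (rule card_Un_disjoint) (use finT disj[of 1 4] disj[of 2 4] disj[of 3 4] in auto)
    also have "card ((T 1 \<union> T 2) \<union> T 3) = card (T 1 \<union> T 2) + card (T 3)"
      by (rule card_Un_disjoint) (use finT disj[of 1 3] disj[of 2 3] in auto)
    finally show ?thesis using cardU[of 1 2] by simp
  qed
  have G01: "card {x\<in>{0..<M}. f 0 x = f 1 x} = card (T 1) + card (T 2)"
    by (rule C) (use eqs(1) in \<open>metis\<close>, simp)
  have G10: "card {x\<in>{0..<M}. f 1 x = f 0 x} = card (T 1) + card (T 2)"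
    by (rule C) (use eqs(1) in \<open>metis\<close>, simp)
  have G23: "card {x\<in>{0..<M}. f 2 x = f 3 x} = card (T 1) + card (T 2)"
    by (rule C) (use eqs(2) in \<open>metis\<close>, simp)
  have G32: "card {x\<in>{0..<M}. f 3 x = f 2 x} = card (T 1) + card (T 2)"
    by (rule C) (use eqs(2) in \<open>metis\<close>, simp)
  have G02: "card {x\<in>{0..<M}. f 0 x = f 2 x} = card (T 1) + card (T 3)"
    by (rule C) (use eqs(3) in \<open>metis\<close>, simp)
  have G20: "card {x\<in>{0..<M}. f 2 x = f 0 x} = card (T 1) + card (T 3)"
    by (rule C) (use eqs(3) in \<open>metis\<close>, simp)
  have G13: "card {x\<in>{0..<M}. f 1 x = f 3 x} = card (T 1) + card (T 3)"
    by (rule C) (use eqs(4) in \<open>metis\<close>, simp)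
  have G31: "card {x\<in>{0..<M}. f 3 x = f 1 x} = card (T 1) + card (T 3)"
    by (rule C) (use eqs(4) in \<open>metis\<close>, simp)
  have G03: "card {x\<in>{0..<M}. f 0 x = f 3 x} = card (T 1) + card (T 4)"
    by (rule C) (use eqs(5) in \<open>metis\<close>, simp)
  have G30: "card {x\<in>{0..<M}. f 3 x = f 0 x} = card (T 1) + card (T 4)"
    by (rule C) (use eqs(5) in \<open>metis\<close>, simp)
  have G12: "card {x\<in>{0..<M}. f 1 x = f 2 x} = card (T 1) + card (T 4)"
    by (rule C) (use eqs(6) in \<open>metis\<close>, simp)
  have G21: "card {x\<in>{0..<M}. f 2 x = f 1 x} = card (T 1) + card (T 4)"
    by (rule C) (use eqs(6) in \<open>metis\<close>, simp)
  have det: "det (Gamma_mat M f) = (int M + int (card (T 1) + card (T 2)) + int (card (T 1) + card (T 3)) + int (card (T 1) + card (T 4)))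
     * (int M + int (card (T 1) + card (T 2)) - int (card (T 1) + card (T 3)) - int (card (T 1) + card (T 4)))
     * (int M - int (card (T 1) + card (T 2)) + int (card (T 1) + card (T 3)) - int (card (T 1) + card (T 4)))
     * (int M - int (card (T 1) + card (T 2)) - int (card (T 1) + card (T 3)) + int (card (T 1) + card (T 4)))"
    unfolding Gamma_mat_def by (rule det4) (simp_all only: prod.case G01 G10 G23 G32 G02 G20 G13 G31 G03 G30 G12 G21, simp_all)
  have part2: "det (Gamma_mat M f) = 16 * (int M + int (type_count M f 1)) * int (type_count M f 2)
                                * int (type_count M f 3) * int (type_count M f 4)"
  proof -
    have IM: "int M = int (card (T 1)) + int (card (T 2)) + int (card (T 3)) + int (card (T 4))"
      using Mc by simp
    show ?thesis unfolding det tc of_nat_add IM by (rule alg16)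
  qed

  let ?D = "oracle_basis M N"
  let ?U = "\<lambda>j. oracle_op N (f j)"
  have M0: "M > 0" using assms(1) by simp
  have fv: "f j x < N" if "j < 4" "x < M" for j x
    using assms(3) that unfolding is_fun_ZM_ZN_def by blast
  have Tpos: "card (T i) > 0 \<longleftrightarrow> (\<exists>x<M. point_type f i x)" for i
  proof -
    have "card (T i) > 0 \<longleftrightarrow> T i \<noteq> {}" using finT[of i] by (simp add: card_gt_0_iff)
    also have "\<dots> \<longleftrightarrow> (\<exists>x<M. point_type f i x)" unfolding T_def by auto
    finally show ?thesis .
  qed
  have zero_comb: "\<forall>d\<in>?D. \<forall>d'\<in>?D. (\<Sum>j<4. c j * ?U j d d') = 0"
    if hc: "\<And>x P. x < M \<Longrightarrow> (\<And>j k. j < 4 \<Longrightarrow> k < 4 \<Longrightarrow> f j x = f k x \<Longrightarrow> P j = P k)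
        \<Longrightarrow> (\<Sum>j<4. c j * (if P j then 1 else 0)) = 0" for c :: "nat \<Rightarrow> complex"
  proof (intro ballI)
    fix d d' assume d: "d \<in> ?D" and d': "d' \<in> ?D"
    obtain x y where dd: "d = (x, y)" by (cases d)
    obtain x' y' where dd': "d' = (x', y')" by (cases d')
    show "(\<Sum>j<4. c j * ?U j d d') = 0"
    proof (cases "x = x'")
      case False
      then show ?thesis unfolding dd dd' oracle_op_def by simp
    next
      case True
      have x: "x < M" using d dd by (auto simp: oracle_basis_def)
      have "(\<Sum>j<4. c j * ?U j d d') = (\<Sum>j<4. c j * (if y = (y' + f j x) mod N then 1 else 0))"
        unfolding dd dd' oracle_op_def using True by simp
      also have "\<dots> = 0"
        by (rule hc[OF x]) simp
      finally show ?thesis .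
    qed
  qed
  have nud: "\<not> unambiguously_distinguishable ?D 4 ?U"
    if hc: "\<And>x P. x < M \<Longrightarrow> (\<And>j k. j < 4 \<Longrightarrow> k < 4 \<Longrightarrow> f j x = f k x \<Longrightarrow> P j = P k)
        \<Longrightarrow> (\<Sum>j<4. c j * (if P j then 1 else 0)) = 0" and c0: "c 0 \<noteq> 0" for c :: "nat \<Rightarrow> complex"
  proof -
    have z: "\<forall>d\<in>?D. \<forall>d'\<in>?D. (\<Sum>j<4. c j * ?U j d d') = 0"
      by (rule zero_comb[of c, OF hc])
    have fD: "finite ?D" by (simp add: oracle_basis_def)
    show ?thesis by (rule not_ud[where c=c, OF fD z _ c0]) simp
  qed
  have dir1: "card (T 2) > 0 \<and> card (T 3) > 0 \<and> card (T 4) > 0"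
    if ud: "unambiguously_distinguishable ?D 4 ?U"
  proof (intro conjI)
    show "card (T 2) > 0"
    proof (rule ccontr)
      assume "\<not> card (T 2) > 0"
      then have n2: "\<not> point_type f 2 x" if "x < M" for x using Tpos[of 2] that by auto
      have "\<not> unambiguously_distinguishable ?D 4 ?U"
      proof (rule nud[of "\<lambda>j. if j < 2 then 1 else -1"])
        fix x and P :: "nat \<Rightarrow> bool" assume x: "x < M"
          and PP: "\<And>j k. j < 4 \<Longrightarrow> k < 4 \<Longrightarrow> f j x = f k x \<Longrightarrow> P j = P k"
        from cov[OF x] n2[OF x] have "point_type f 1 x \<or> point_type f 3 x \<or> point_type f 4 x" by blast
        then show "(\<Sum>j<4. (if j < 2 then 1 else -1) * (if P j then 1 else 0 :: complex)) = 0"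
          proof (elim disjE)
            assume h: "point_type f 1 x"
            have e1: "P 1 = P 0" using h PP[of 1 0] unfolding pt_iffs by simp
            have e2: "P 2 = P 0" using h PP[of 2 0] unfolding pt_iffs by simp
            have e3: "P 3 = P 0" using h PP[of 3 0] unfolding pt_iffs by simp
            show "(\<Sum>j<4. (if j < 2 then 1 else -1) * (if P j then 1 else 0 :: complex)) = 0" using e1 e2 e3 by (cases "P 0"; cases "P 1"; cases "P 2"; simp add: sum4)
          next
            assume h: "point_type f 3 x"
            have e4: "P 2 = P 0" using h PP[of 2 0] unfolding pt_iffs by simp
            have e5: "P 3 = P 1" using h PP[of 3 1] unfolding pt_iffs by simp
            show "(\<Sum>j<4. (if j < 2 then 1 else -1) * (if P j then 1 else 0 :: complex)) = 0" using e4 e5 by (cases "P 0"; cases "P 1"; cases "P 2"; simp add: sum4)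
          next
            assume h: "point_type f 4 x"
            have e6: "P 3 = P 0" using h PP[of 3 0] unfolding pt_iffs by simp
            have e7: "P 2 = P 1" using h PP[of 2 1] unfolding pt_iffs by simp
            show "(\<Sum>j<4. (if j < 2 then 1 else -1) * (if P j then 1 else 0 :: complex)) = 0" using e6 e7 by (cases "P 0"; cases "P 1"; cases "P 2"; simp add: sum4)
          qed
      qed simp
      then show False using ud by blast
    qed
    show "card (T 3) > 0"
    proof (rule ccontr)
      assume "\<not> card (T 3) > 0"
      then have n2: "\<not> point_type f 3 x" if "x < M" for x using Tpos[of 3] that by auto
      have "\<not> unambiguously_distinguishable ?D 4 ?U"
      proof (rule nud[of "\<lambda>j. if j = 0 \<or> j = 2 then 1 else -1"])
        fix x and P :: "nat \<Rightarrow> bool" assume x: "x < M"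
          and PP: "\<And>j k. j < 4 \<Longrightarrow> k < 4 \<Longrightarrow> f j x = f k x \<Longrightarrow> P j = P k"
        from cov[OF x] n2[OF x] have "point_type f 1 x \<or> point_type f 2 x \<or> point_type f 4 x" by blast
        then show "(\<Sum>j<4. (if j = 0 \<or> j = 2 then 1 else -1) * (if P j then 1 else 0 :: complex)) = 0"
          proof (elim disjE)
            assume h: "point_type f 1 x"
            have e8: "P 1 = P 0" using h PP[of 1 0] unfolding pt_iffs by simp
            have e9: "P 2 = P 0" using h PP[of 2 0] unfolding pt_iffs by simp
            have e10: "P 3 = P 0" using h PP[of 3 0] unfolding pt_iffs by simp
            show "(\<Sum>j<4. (if j = 0 \<or> j = 2 then 1 else -1) * (if P j then 1 else 0 :: complex)) = 0" using e8 e9 e10 by (cases "P 0"; cases "P 1"; cases "P 2"; simp add: sum4)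
          next
            assume h: "point_type f 2 x"
            have e11: "P 1 = P 0" using h PP[of 1 0] unfolding pt_iffs by simp
            have e12: "P 3 = P 2" using h PP[of 3 2] unfolding pt_iffs by simp
            show "(\<Sum>j<4. (if j = 0 \<or> j = 2 then 1 else -1) * (if P j then 1 else 0 :: complex)) = 0" using e11 e12 by (cases "P 0"; cases "P 1"; cases "P 2"; simp add: sum4)
          next
            assume h: "point_type f 4 x"
            have e13: "P 3 = P 0" using h PP[of 3 0] unfolding pt_iffs by simp
            have e14: "P 2 = P 1" using h PP[of 2 1] unfolding pt_iffs by simp
            show "(\<Sum>j<4. (if j = 0 \<or> j = 2 then 1 else -1) * (if P j then 1 else 0 :: complex)) = 0" using e13 e14 by (cases "P 0"; cases "P 1"; cases "P 2"; simp add: sum4)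
          qed
      qed simp
      then show False using ud by blast
    qed
    show "card (T 4) > 0"
    proof (rule ccontr)
      assume "\<not> card (T 4) > 0"
      then have n2: "\<not> point_type f 4 x" if "x < M" for x using Tpos[of 4] that by auto
      have "\<not> unambiguously_distinguishable ?D 4 ?U"
      proof (rule nud[of "\<lambda>j. if j = 0 \<or> j = 3 then 1 else -1"])
        fix x and P :: "nat \<Rightarrow> bool" assume x: "x < M"
          and PP: "\<And>j k. j < 4 \<Longrightarrow> k < 4 \<Longrightarrow> f j x = f k x \<Longrightarrow> P j = P k"
        from cov[OF x] n2[OF x] have "point_type f 1 x \<or> point_type f 2 x \<or> point_type f 3 x" by blast
        then show "(\<Sum>j<4. (if j = 0 \<or> j = 3 then 1 else -1) * (if P j then 1 else 0 :: complex)) = 0"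
          proof (elim disjE)
            assume h: "point_type f 1 x"
            have e15: "P 1 = P 0" using h PP[of 1 0] unfolding pt_iffs by simp
            have e16: "P 2 = P 0" using h PP[of 2 0] unfolding pt_iffs by simp
            have e17: "P 3 = P 0" using h PP[of 3 0] unfolding pt_iffs by simp
            show "(\<Sum>j<4. (if j = 0 \<or> j = 3 then 1 else -1) * (if P j then 1 else 0 :: complex)) = 0" using e15 e16 e17 by (cases "P 0"; cases "P 1"; cases "P 2"; simp add: sum4)
          next
            assume h: "point_type f 2 x"
            have e18: "P 1 = P 0" using h PP[of 1 0] unfolding pt_iffs by simp
            have e19: "P 3 = P 2" using h PP[of 3 2] unfolding pt_iffs by simp
            show "(\<Sum>j<4. (if j = 0 \<or> j = 3 then 1 else -1) * (if P j then 1 else 0 :: complex)) = 0" using e18 e19 by (cases "P 0"; cases "P 1"; cases "P 2"; simp add: sum4)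
          next
            assume h: "point_type f 3 x"
            have e20: "P 2 = P 0" using h PP[of 2 0] unfolding pt_iffs by simp
            have e21: "P 3 = P 1" using h PP[of 3 1] unfolding pt_iffs by simp
            show "(\<Sum>j<4. (if j = 0 \<or> j = 3 then 1 else -1) * (if P j then 1 else 0 :: complex)) = 0" using e20 e21 by (cases "P 0"; cases "P 1"; cases "P 2"; simp add: sum4)
          qed
      qed simp
      then show False using ud by blast
    qed
  qed
  have dir2: "unambiguously_distinguishable ?D 4 ?U"
    if pos: "card (T 2) > 0" "card (T 3) > 0" "card (T 4) > 0"
  proof -
    obtain x2 where x2: "x2 < M" "point_type f 2 x2" using pos(1) Tpos[of 2] by auto
    obtain x3 where x3: "x3 < M" "point_type f 3 x3" using pos(2) Tpos[of 3] by auto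
    obtain x4 where x4: "x4 < M" "point_type f 4 x4" using pos(3) Tpos[of 4] by auto
    define s where "s = complex_of_real (1 / sqrt (real M))"
    have s0: "s \<noteq> 0" using M0 by (simp add: s_def)
    define \<psi> where "\<psi> = (\<lambda>p::(nat\<times>nat)\<times>nat. if fst p = (snd p, 0) then s else 0)"
    have E: "(\<Sum>j<4. c j * (if f k x = f j x then 1 else 0)) = 0"
      if H: "\<forall>p\<in>?D \<times> {0..<M}. (\<Sum>j<4. c j * op_tensor_id ?D (?U j) \<psi> p) = 0"
        and x: "x < M" and k: "k < 4" for c :: "nat \<Rightarrow> complex" and x k
    proof -
      have p: "((x, f k x), x) \<in> ?D \<times> {0..<M}" using x fv[OF k x] by (simp add: oracle_basis_def)
      have "0 = (\<Sum>j<4. c j * op_tensor_id ?D (?U j) \<psi> ((x, f k x), x))" using H p by simp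
      also have "\<dots> = (\<Sum>j<4. s * (c j * (if f k x = f j x then 1 else 0)))"
      proof (rule sum.cong[OF refl])
        fix j :: nat assume j: "j \<in> {..<4}"
        have "op_tensor_id ?D (?U j) \<psi> ((x, f k x), x) = (if x = x \<and> f k x = f j x mod N then s else 0)"
          unfolding \<psi>_def by (rule oracle_psi[OF x assms(2)])
        also have "f j x mod N = f j x" using fv[of j x] j x by simp
        finally show "c j * op_tensor_id ?D (?U j) \<psi> ((x, f k x), x) = s * (c j * (if f k x = f j x then 1 else 0))"
          by simp
      qed
      also have "\<dots> = s * (\<Sum>j<4. c j * (if f k x = f j x then 1 else 0))" by (simp add: sum_distrib_left)
      finally show ?thesis using s0 by simp
    qed
    show ?thesis unfolding unambiguously_distinguishable_def
    proof (intro exI conjI)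
      show "(\<Sum>p\<in>?D \<times> {0..<M}. (cmod (\<psi> p))\<^sup>2) = 1"
        unfolding \<psi>_def s_def by (rule psi_norm[OF M0 assms(2)])
      show "lin_indep_family (?D \<times> {0..<M}) 4 (\<lambda>j. op_tensor_id ?D (?U j) \<psi>)"
        unfolding lin_indep_family_def
      proof (rule allI, rule impI)
        fix c :: "nat \<Rightarrow> complex"
        assume H: "\<forall>p\<in>?D \<times> {0..<M}. (\<Sum>j<4. c j * op_tensor_id ?D (?U j) \<psi> p) = 0"
        have a1: "c 0 + c 1 = 0" using E[OF H x2(1), of 0] x2(2) unfolding pt_iffs by (simp add: sum4)
        have a2: "c 2 + c 3 = 0" using E[OF H x2(1), of 2] x2(2) unfolding pt_iffs by (simp add: sum4)
        have a3: "c 0 + c 2 = 0" using E[OF H x3(1), of 0] x3(2) unfolding pt_iffs by (simp add: sum4)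
        have a4: "c 1 + c 3 = 0" using E[OF H x3(1), of 1] x3(2) unfolding pt_iffs by (simp add: sum4)
        have a5: "c 0 + c 3 = 0" using E[OF H x4(1), of 0] x4(2) unfolding pt_iffs by (simp add: sum4)
        have a6: "c 1 + c 2 = 0" using E[OF H x4(1), of 1] x4(2) unfolding pt_iffs by (simp add: sum4)
        have "2 * c 0 = (c 0 + c 2) + (c 0 + c 3) - (c 2 + c 3)" by simp
        then have z0: "c 0 = 0" using a2 a3 a5 by simp
        have z1: "c 1 = 0" using a1 z0 by simp
        have z2: "c 2 = 0" using a3 z0 by simp
        have z3: "c 3 = 0" using a5 z0 by simp
        show "\<forall>j<4. c j = 0"
        proof (intro allI impI)
          fix j :: nat assume "j < 4"
          then have "j = 0 \<or> j = 1 \<or> j = 2 \<or> j = 3" by arith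
          then show "c j = 0" using z0 z1 z2 z3 by auto
        qed
      qed
    qed
  qed
  show ?thesis
    using part1 part2 dir1 dir2 unfolding tc by blast
qed

end
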